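(* Let $p\in(1,\infty)$. Every Banach space with property HC$_p$ has the alternating $p$-Banach-Saks property.
   Context: $[\mathbb M]^k$ ($\mathbb M\subseteq\mathbb N$ infinite) is the set of $\bar n=(n_1<\dots<n_k)$ in $\mathbb M$ with Hamming distance $d_{\mathbb H}(\bar n,\bar m)=|\{j:n_j\ne m_j\}|$; $[\mathbb N]^\omega$ is the set of infinite subsets of $\mathbb N$. A metric space $(M,d)$ has property HC$_p$ if there is $\lambda>0$ such that for every $k$ and every Lipschitz $f:([\mathbb N]^k,d_{\mathbb H})\to M$ there are $\bar n,\bar m\in[\mathbb N]^k$ with $\bar n\cap\bar m=\varnothing$ (as sets) and $d(f(\bar n),f(\bar m))\le\lambda k^{1/p}\mathrm{Lip}(f)$. A Banach space $X$ has the alternating $p$-Banach-Saks property if there is $C>0$ such that for every sequence $(x_n)$ in $B_X$ and every $k\in\mathbb N$ there is $\mathbb M\in[\mathbb N]^\omega$ with $\|\sum_{j=1}^k(-1)^jx_{n_j}\|\le Ck^{1/p}$ for all $(n_1,\dots,n_k)\in[\mathbb M]^k$. *)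

theory Defs
  imports "HOL-Analysis.Analysis"
begin

definition incr_tuples :: "nat \<Rightarrow> nat set \<Rightarrow> nat list set" where
  "incr_tuples k M = {ns. length ns = k \<and> sorted_wrt (<) ns \<and> set ns \<subseteq> M}"

definition hamming :: "nat list \<Rightarrow> nat list \<Rightarrow> nat" where
  "hamming ns ms = card {j. j < length ns \<and> ns ! j \<noteq> ms ! j}"

definition hamming_lipschitz :: "nat \<Rightarrow> (nat list \<Rightarrow> 'a::metric_space) \<Rightarrow> bool" where
  "hamming_lipschitz k f \<longleftrightarrow> (\<exists>L. \<forall>ns\<in>incr_tuples k UNIV. \<forall>ms\<in>incr_tuples k UNIV.
      dist (f ns) (f ms) \<le> L * real (hamming ns ms))"

definition hamming_lip :: "nat \<Rightarrow> (nat list \<Rightarrow> 'a::metric_space) \<Rightarrow> real" where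
  "hamming_lip k f = (SUP (ns, ms) \<in> {(ns, ms). ns \<in> incr_tuples k UNIV \<and> ms \<in> incr_tuples k UNIV \<and> ns \<noteq> ms}.
      dist (f ns) (f ms) / real (hamming ns ms))"

definition HC :: "real \<Rightarrow> 'a::metric_space set \<Rightarrow> bool" where
  "HC p M \<longleftrightarrow> (\<exists>lam>0. \<forall>k. \<forall>f. (\<forall>ns\<in>incr_tuples k UNIV. f ns \<in> M) \<and> hamming_lipschitz k f \<longrightarrow>
      (\<exists>ns\<in>incr_tuples k UNIV. \<exists>ms\<in>incr_tuples k UNIV. set ns \<inter> set ms = {} \<and>
         dist (f ns) (f ms) \<le> lam * real k powr (1 / p) * hamming_lip k f))"

definition alternating_BS :: "real \<Rightarrow> 'a::real_normed_vector itself \<Rightarrow> bool" where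
  "alternating_BS p _ \<longleftrightarrow> (\<exists>C>0. \<forall>x :: nat \<Rightarrow> 'a. (\<forall>n. norm (x n) \<le> 1) \<longrightarrow>
      (\<forall>k. \<exists>M. infinite M \<and> (\<forall>ns\<in>incr_tuples k M.
         norm (\<Sum>j<k. (-1) ^ (j + 1) *\<^sub>R x (ns ! j)) \<le> C * real k powr (1 / p))))"

end

theory Submission
  imports Defs "HOL-Library.Ramsey"
begin

lemma count_sum:
  fixes F :: "nat \<Rightarrow> 'a::comm_monoid_add"
  shows "(\<Sum>i<length s. if s!i then F (length (filter id (take i s))) else 0)
         = (\<Sum>j<length (filter id s). F j)"
proof (induction s rule: rev_induct)
  case Nil then show ?case by simp
next
  case (snoc b s)
  have "(\<Sum>i<length (s@[b]). if (s@[b])!i then F (length (filter id (take i (s@[b])))) else 0)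
      = (\<Sum>i<length s. if s!i then F (length (filter id (take i s))) else 0)
        + (if b then F (length (filter id s)) else 0)"
  proof -
    have "(\<Sum>i<length s. if (s@[b])!i then F (length (filter id (take i (s@[b])))) else 0)
       = (\<Sum>i<length s. if s!i then F (length (filter id (take i s))) else 0)"
      by (rule sum.cong) (auto simp: nth_append)
    then show ?thesis by simp
  qed
  then show ?case using snoc by (auto simp: id_def)
qed

lemma alt_sum:
  fixes f :: "nat \<Rightarrow> 'a::real_normed_vector"
  shows "(\<Sum>j<r. f (2*j) - f (2*j+1)) = (\<Sum>l<2*r. (-1)^l *\<^sub>R f l)"
  by (induction r) (simp_all add: algebra_simps)

lemma ramsey_many:
  fixes F :: "'b set" and Q :: "'b \<Rightarrow> 'a set \<Rightarrow> bool"
  assumes "finite F" "infinite Z"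
  shows "\<exists>Y\<subseteq>Z. infinite Y \<and> (\<forall>q\<in>F. (\<forall>X. X \<subseteq> Y \<and> finite X \<and> card X = n \<longrightarrow> Q q X)
          \<or> (\<forall>X. X \<subseteq> Y \<and> finite X \<and> card X = n \<longrightarrow> \<not> Q q X))"
  using assms(1)
proof (induction F rule: finite_induct)
  case empty then show ?case using assms(2) by blast
next
  case (insert q F)
  then obtain Y where Y: "Y \<subseteq> Z" "infinite Y" "\<forall>q\<in>F. (\<forall>X. X \<subseteq> Y \<and> finite X \<and> card X = n \<longrightarrow> Q q X)
          \<or> (\<forall>X. X \<subseteq> Y \<and> finite X \<and> card X = n \<longrightarrow> \<not> Q q X)" by blast
  obtain Y' t where Y': "Y' \<subseteq> Y" "infinite Y'" "t < (2::nat)"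
     "\<forall>X. X \<subseteq> Y' \<and> finite X \<and> card X = n \<longrightarrow> (if Q q X then 1 else 0) = t"
  proof -
    have "\<forall>X. X \<subseteq> Y \<and> finite X \<and> card X = n \<longrightarrow> (if Q q X then 1 else 0) < (2::nat)" by simp
    from Ramsey[OF Y(2) this] show ?thesis using that by blast
  qed
  show ?case
  proof (intro exI conjI ballI)
    show "Y' \<subseteq> Z" using Y Y' by blast
    show "infinite Y'" by fact
    fix q' assume "q' \<in> insert q F"
    then show "(\<forall>X. X \<subseteq> Y' \<and> finite X \<and> card X = n \<longrightarrow> Q q' X)
          \<or> (\<forall>X. X \<subseteq> Y' \<and> finite X \<and> card X = n \<longrightarrow> \<not> Q q' X)"
    proof
      assume "q' = q"
      then show ?thesis using Y'(3,4) by (cases "t = 0") (auto split: if_splits)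
    next
      assume "q' \<in> F"
      then have "(\<forall>X. X \<subseteq> Y \<and> finite X \<and> card X = n \<longrightarrow> Q q' X)
          \<or> (\<forall>X. X \<subseteq> Y \<and> finite X \<and> card X = n \<longrightarrow> \<not> Q q' X)" using Y(3) by blast
      then show ?thesis using Y'(1) by blast
    qed
  qed
qed

lemma comb:
  fixes x :: "nat \<Rightarrow> 'a::real_normed_vector" and e :: "nat \<Rightarrow> nat" and s :: "bool list" and c :: "nat list"
  assumes e: "strict_mono e" and eY: "\<forall>k. e k \<in> Y"
    and lens: "length s = m" and cnt: "length (filter id s) = r" and m: "m = 2*r"
    and hom: "\<forall>cs\<in>incr_tuples m Y. norm (\<Sum>i<m. (if s!i then 1 else -1) *\<^sub>R x (cs!i)) \<le> \<epsilon>"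
    and cl: "length c = m" and cs: "sorted_wrt (<) c" and cr: "\<forall>l<m. c!l \<in> range (\<lambda>k. e ((m+1)*(k+1)))"
  shows "norm (\<Sum>l<m. (-1)^l *\<^sub>R x (c!l)) \<le> 2*\<epsilon>"
proof -
  have "\<forall>l. \<exists>k. l < m \<longrightarrow> c!l = e ((m+1)*(k+1))" using cr by blast
  from choice[OF this] obtain kk where kk: "\<forall>l. l < m \<longrightarrow> c!l = e ((m+1)*(kk l+1))" by blast
  define a where "a l = (m+1)*(kk l+1)" for l
  have ca: "c!l = e (a l)" if "l < m" for l using kk that a_def by simp
  have a0: "m+1 \<le> a l" for l by (simp add: a_def)
  have gap: "a l + (m+1) \<le> a l'" if "l < l'" "l' < m" for l l'
  proof -
    have "c!l < c!l'" using cs cl that sorted_wrt_iff_nth_less by blast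
    then have "e (a l) < e (a l')" using ca that by simp
    then have "a l < a l'" using e strict_mono_less by blast
    then have "kk l + 1 < kk l' + 1" unfolding a_def by (metis mult_less_cancel1)
    then have "kk l + 2 \<le> kk l' + 1" by simp
    then have "(m+1)*(kk l+2) \<le> (m+1)*(kk l'+1)" by (rule mult_le_mono2)
    then show ?thesis unfolding a_def by (simp add: algebra_simps)
  qed
  have amono: "a l \<le> a l'" if "l \<le> l'" "l' < m" for l l'
    using gap[of l l'] that by (cases "l = l'") auto
  define t where "t i = length (filter id (take i s))" for i
  have tadd: "t j = t i + length (filter id (take (j-i) (drop i s)))" if "i \<le> j" for i j
  proof -
    have "take j s = take i s @ take (j-i) (drop i s)"
      using take_add[of i "j-i" s] that by simp
    then show ?thesis unfolding t_def by simp
  qed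
  have tmono: "t i \<le> t j" if "i \<le> j" for i j using tadd[OF that] by simp
  have tstrict: "t i + 1 \<le> t j" if "i < j" "i < m" "s!i" for i j
  proof -
    have "drop i s = s!i # drop (Suc i) s" using that lens by (metis Cons_nth_drop_Suc)
    then have "take (j-i) (drop i s) = s!i # take (j - i - 1) (drop (Suc i) s)"
      using that by (cases "j-i") auto
    then have "1 \<le> length (filter id (take (j-i) (drop i s)))" using that by simp
    then show ?thesis using tadd[of i j] that by simp
  qed
  have tm: "t m = r" unfolding t_def using lens cnt by simp
  have tlt: "t i < r" if "i < m" "s!i" for i using tstrict[OF that(1) that] tm by simp
  have tle: "t i \<le> r" for i
  proof -
    have "s = take i s @ drop i s" by simp
    then have "length (filter id s) = t i + length (filter id (drop i s))"
      unfolding t_def by (metis filter_append length_append)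
    then show ?thesis using cnt by simp
  qed
  define w where "w j = (if j = 0 then 0 else a (2*j-1) + 1)" for j
  have wlt: "w (t i) + i < a (2 * t i)" if "i < m" "t i < r" for i
  proof (cases "t i = 0")
    case True then show ?thesis using a0[of 0] that by (simp add: w_def)
  next
    case False
    then have "a (2 * t i - 1) + (m+1) \<le> a (2 * t i)" using gap[of "2*t i - 1" "2 * t i"] that m by simp
    then show ?thesis using False that by (simp add: w_def)
  qed
  have wge: "a l < w j" if "1 \<le> j" "j \<le> r" "l \<le> 2*j - 1" for l j
  proof -
    have "2*j-1 < m" using that m by simp
    then have "a l \<le> a (2*j-1)" using amono[of l "2*j-1"] that by simp
    then show ?thesis using that by (simp add: w_def)
  qed
  have wmono: "w j \<le> w j'" if "j \<le> j'" "j' \<le> r" for j j'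
  proof (cases "j = 0")
    case False
    have "2*j'-1 < m" "2*j-1 \<le> 2*j'-1" using that m False by auto
    then have "a (2*j-1) \<le> a (2*j'-1)" using amono by simp
    then show ?thesis using that False by (simp add: w_def)
  qed (simp add: w_def)
  define vS where "vS i = (if s!i then a (2*t i) else w (t i) + i)" for i
  define vT where "vT i = (if s!i then a (2*t i + 1) else w (t i) + i)" for i
  have monoS: "vS i < vS j" if "i < j" "j < m" for i j
  proof -
    have im: "i < m" using that by simp
    consider "s!i" "s!j" | "s!i" "\<not> s!j" | "\<not> s!i" "s!j" | "\<not> s!i" "\<not> s!j" by blast
    then show ?thesis
    proof cases
      case 1
      then have "t i + 1 \<le> t j" "t j < r" using tstrict[OF that(1) im] tlt[OF that(2)] by auto
      then show ?thesis using 1 gap[of "2*t i" "2*t j"] m by (simp add: vS_def)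
    next
      case 2
      then have "t i + 1 \<le> t j" using tstrict[OF that(1) im] by auto
      then have "a (2*t i) < w (t j)" using tle[of j] by (intro wge) auto
      then show ?thesis using 2 by (simp add: vS_def)
    next
      case 3
      then have "t i \<le> t j" "t j < r" using tmono[of i j] tlt[OF that(2)] that by auto
      then show ?thesis using 3 wlt[OF im] amono[of "2*t i" "2*t j"] m by (simp add: vS_def)
    next
      case 4
      then show ?thesis using wmono[of "t i" "t j"] tmono[of i j] tle[of j] that by (simp add: vS_def)
    qed
  qed
  have monoT: "vT i < vT j" if "i < j" "j < m" for i j
  proof -
    have im: "i < m" using that by simp
    consider "s!i" "s!j" | "s!i" "\<not> s!j" | "\<not> s!i" "s!j" | "\<not> s!i" "\<not> s!j" by blast
    then show ?thesis
    proof cases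
      case 1
      then have "t i + 1 \<le> t j" "t j < r" using tstrict[OF that(1) im] tlt[OF that(2)] by auto
      then show ?thesis using 1 gap[of "2*t i+1" "2*t j+1"] m by (simp add: vT_def)
    next
      case 2
      then have "t i + 1 \<le> t j" using tstrict[OF that(1) im] by auto
      then have "a (2*t i+1) < w (t j)" using tle[of j] by (intro wge) auto
      then show ?thesis using 2 by (simp add: vT_def)
    next
      case 3
      then have "t i \<le> t j" "t j < r" using tmono[of i j] tlt[OF that(2)] that by auto
      then show ?thesis using 3 wlt[OF im] amono[of "2*t i" "2*t j+1"] m by (simp add: vT_def)
    next
      case 4
      then show ?thesis using wmono[of "t i" "t j"] tmono[of i j] tle[of j] that by (simp add: vT_def)
    qed
  qed
  define sg where "sg i = (if s!i then 1 else -1::real)" for i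
  have inc: "map (\<lambda>i. e (v i)) [0..<m] \<in> incr_tuples m Y"
    if mv: "\<And>i j. i < j \<Longrightarrow> j < m \<Longrightarrow> v i < v j" for v
    unfolding incr_tuples_def
  proof (intro CollectI conjI)
    show "length (map (\<lambda>i. e (v i)) [0..<m]) = m" by simp
    show "set (map (\<lambda>i. e (v i)) [0..<m]) \<subseteq> Y" using eY by auto
    show "sorted_wrt (<) (map (\<lambda>i. e (v i)) [0..<m])"
      unfolding sorted_wrt_iff_nth_less
    proof (intro allI impI)
      fix i j assume ij: "i < j" "j < length (map (\<lambda>i. e (v i)) [0..<m])"
      then have "v i < v j" using mv by simp
      then have "e (v i) < e (v j)" using e by (simp add: strict_mono_less)
      then show "map (\<lambda>i. e (v i)) [0..<m] ! i < map (\<lambda>i. e (v i)) [0..<m] ! j" using ij by simp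
    qed
  qed
  have bnd: "norm (\<Sum>i<m. sg i *\<^sub>R x (e (v i))) \<le> \<epsilon>"
    if mv: "\<And>i j. i < j \<Longrightarrow> j < m \<Longrightarrow> v i < v j" for v
  proof -
    have "norm (\<Sum>i<m. (if s!i then 1 else -1) *\<^sub>R x (map (\<lambda>i. e (v i)) [0..<m] ! i)) \<le> \<epsilon>"
      using bspec[OF hom inc[OF mv]] .
    moreover have "(\<Sum>i<m. (if s!i then 1 else -1) *\<^sub>R x (map (\<lambda>i. e (v i)) [0..<m] ! i))
       = (\<Sum>i<m. sg i *\<^sub>R x (e (v i)))"
      by (rule sum.cong) (auto simp: sg_def)
    ultimately show ?thesis by simp
  qed
  have bS: "norm (\<Sum>i<m. sg i *\<^sub>R x (e (vS i))) \<le> \<epsilon>" by (rule bnd) (rule monoS)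
  have bT: "norm (\<Sum>i<m. sg i *\<^sub>R x (e (vT i))) \<le> \<epsilon>" by (rule bnd) (rule monoT)
  define F where "F j = x (c!(2*j)) - x (c!(2*j+1))" for j
  have "(\<Sum>i<m. sg i *\<^sub>R x (e (vS i))) - (\<Sum>i<m. sg i *\<^sub>R x (e (vT i)))
      = (\<Sum>i<m. sg i *\<^sub>R x (e (vS i)) - sg i *\<^sub>R x (e (vT i)))"
    by (simp add: sum_subtractf)
  also have "\<dots> = (\<Sum>i<m. if s!i then F (length (filter id (take i s))) else 0)"
  proof (rule sum.cong)
    fix i assume "i \<in> {..<m}"
    then have im: "i < m" by simp
    show "sg i *\<^sub>R x (e (vS i)) - sg i *\<^sub>R x (e (vT i)) = (if s!i then F (length (filter id (take i s))) else 0)"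
    proof (cases "s!i")
      case True
      then have "2 * t i + 1 < m" using tlt[OF im] m by simp
      then show ?thesis using True ca[of "2*t i"] ca[of "2*t i+1"]
        by (simp add: sg_def vS_def vT_def F_def t_def)
    next
      case False then show ?thesis by (simp add: sg_def vS_def vT_def)
    qed
  qed simp
  also have "\<dots> = (\<Sum>j<r. F j)" using count_sum[of s F] cnt lens by simp
  also have "\<dots> = (\<Sum>l<m. (-1)^l *\<^sub>R x (c!l))" unfolding F_def m by (rule alt_sum)
  finally have eq: "(\<Sum>l<m. (-1)^l *\<^sub>R x (c!l)) = (\<Sum>i<m. sg i *\<^sub>R x (e (vS i))) - (\<Sum>i<m. sg i *\<^sub>R x (e (vT i)))" by simp
  show ?thesis unfolding eq using norm_triangle_ineq4[of "(\<Sum>i<m. sg i *\<^sub>R x (e (vS i)))" "(\<Sum>i<m. sg i *\<^sub>R x (e (vT i)))"] bS bT by linarith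
qed


lemma list_sum_set:
  fixes h :: "nat \<Rightarrow> 'a::comm_monoid_add"
  assumes "distinct xs"
  shows "(\<Sum>i<length xs. h (xs!i)) = (\<Sum>c\<in>set xs. h c)"
  using sum.reindex_bij_betw[OF bij_betw_nth[OF assms refl refl], of h] by simp

lemma incr_tuples_props:
  assumes "ns \<in> incr_tuples k M"
  shows "distinct ns" "card (set ns) = k" "sorted_list_of_set (set ns) = ns" "set ns \<subseteq> M" "length ns = k"
proof -
  have s: "sorted_wrt (<) ns" "length ns = k" "set ns \<subseteq> M" using assms by (auto simp: incr_tuples_def)
  show d: "distinct ns" using s(1) by (simp add: strict_sorted_iff)
  show "card (set ns) = k" using d s(2) by (simp add: distinct_card)
  show "sorted_list_of_set (set ns) = ns" using s(1) d
    by (simp add: sorted_list_of_set_sort_remdups distinct_remdups_id strict_sorted_iff sorted_sort_id)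
  show "set ns \<subseteq> M" "length ns = k" using s by auto
qed

lemma extend_tuple:
  assumes "infinite M" "c \<in> incr_tuples K M"
  shows "\<exists>c'. c' \<in> incr_tuples (K + j) M \<and> take K c' = c"
proof (induction j)
  case 0 then show ?case using assms(2) incr_tuples_props[OF assms(2)] by (intro exI[of _ c]) simp
next
  case (Suc j)
  then obtain c' where c': "c' \<in> incr_tuples (K + j) M" "take K c' = c" by blast
  have "finite (set c')" by simp
  define b where "b = Max (insert 0 (set c'))"
  have "infinite (M - {..b})" using assms(1) by (metis Diff_infinite_finite finite_atMost)
  then obtain y where yy: "y \<in> M - {..b}" using infinite_imp_nonempty by blast
  have zb: "z \<le> b" if "z \<in> set c'" for z unfolding b_def using that by (intro Max_ge) auto
  have y: "y \<in> M" "\<forall>z\<in>set c'. z < y" using yy zb by force+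
  have "c' @ [y] \<in> incr_tuples (K + Suc j) M"
    using c'(1) y by (auto simp: incr_tuples_def sorted_wrt_append)
  moreover have "take K (c' @ [y]) = c" using c' incr_tuples_props[OF c'(1)] by simp
  ultimately show ?case by blast
qed

lemma dist_bound:
  fixes x :: "nat \<Rightarrow> 'a::real_normed_vector"
  assumes x: "\<forall>n. norm (x n) \<le> 1" and ns: "length ns = r" and ms: "length ms = r"
  shows "dist (\<Sum>j<r. x (e (ns!j))) (\<Sum>j<r. x (e (ms!j))) \<le> 2 * real (hamming ns ms)"
proof -
  have "dist (\<Sum>j<r. x (e (ns!j))) (\<Sum>j<r. x (e (ms!j))) = norm (\<Sum>j<r. x (e (ns!j)) - x (e (ms!j)))"
    by (simp add: dist_norm sum_subtractf)
  also have "\<dots> \<le> (\<Sum>j<r. norm (x (e (ns!j)) - x (e (ms!j))))" by (rule norm_sum)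
  also have "\<dots> \<le> (\<Sum>j<r. if ns!j \<noteq> ms!j then 2 else 0)"
  proof (rule sum_mono)
    fix j
    have "norm (x (e (ns!j)) - x (e (ms!j))) \<le> norm (x (e (ns!j))) + norm (x (e (ms!j)))"
      by (rule norm_triangle_ineq4)
    also have "\<dots> \<le> 2" using x by (smt (verit))
    finally show "norm (x (e (ns!j)) - x (e (ms!j))) \<le> (if ns!j \<noteq> ms!j then 2 else 0)" by simp
  qed
  also have "\<dots> = (\<Sum>j\<in>{j\<in>{..<r}. ns!j \<noteq> ms!j}. (2::real))"
    by (rule sum.inter_filter[symmetric]) simp
  also have "\<dots> = 2 * real (hamming ns ms)"
  proof -
    have "{j\<in>{..<r}. ns!j \<noteq> ms!j} = {j. j < length ns \<and> ns!j \<noteq> ms!j}" using ns by auto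
    then show ?thesis unfolding hamming_def by simp
  qed
  finally show ?thesis .
qed

lemma lip:
  fixes x :: "nat \<Rightarrow> 'a::real_normed_vector"
  assumes x: "\<forall>n. norm (x n) \<le> 1" and r: "1 \<le> r"
  shows "hamming_lipschitz r (\<lambda>ns. \<Sum>j<r. x (e (ns!j)))"
    and "hamming_lip r (\<lambda>ns. \<Sum>j<r. x (e (ns!j))) \<le> 2"
proof -
  show "hamming_lipschitz r (\<lambda>ns. \<Sum>j<r. x (e (ns!j)))"
    unfolding hamming_lipschitz_def
    using dist_bound[OF x] by (intro exI[of _ 2]) (auto simp: incr_tuples_def)
  define S where "S = {(ns, ms). ns \<in> incr_tuples r UNIV \<and> ms \<in> incr_tuples r UNIV \<and> ns \<noteq> ms}"
  have "([0..<r], [1..<r+1]) \<in> S"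
  proof -
    have "[0..<r] ! 0 \<noteq> [1..<r+1] ! 0" using r by (simp add: nth_upt del: upt_Suc)
    then have "[0..<r] \<noteq> [1..<r+1]" by metis
    then show ?thesis unfolding S_def incr_tuples_def by (simp add: sorted_wrt_upt del: upt_Suc)
  qed
  then have ne: "S \<noteq> {}" by blast
  have "(case q of (ns, ms) \<Rightarrow> dist (\<Sum>j<r. x (e (ns!j))) (\<Sum>j<r. x (e (ms!j))) / real (hamming ns ms)) \<le> 2"
    if "q \<in> S" for q
  proof -
    obtain ns ms where q: "q = (ns, ms)" "length ns = r" "length ms = r" "ns \<noteq> ms"
    proof -
      obtain ns ms where "q = (ns, ms)" by (cases q)
      then show ?thesis using that \<open>q \<in> S\<close> unfolding S_def incr_tuples_def by auto
    qed
    have "\<exists>j<length ns. ns!j \<noteq> ms!j" using q nth_equalityI by metis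
    then have "{j. j < length ns \<and> ns!j \<noteq> ms!j} \<noteq> {}" by blast
    then have hp: "0 < hamming ns ms" unfolding hamming_def by (simp add: card_gt_0_iff)
    have "dist (\<Sum>j<r. x (e (ns!j))) (\<Sum>j<r. x (e (ms!j))) \<le> 2 * real (hamming ns ms)"
      using dist_bound[OF x q(2,3)] .
    then show ?thesis using q hp by (simp add: divide_le_eq)
  qed
  then show "hamming_lip r (\<lambda>ns. \<Sum>j<r. x (e (ns!j))) \<le> 2"
    unfolding hamming_lip_def S_def[symmetric] using ne by (intro cSUP_least) auto
qed


theorem mainTheorem11:
  fixes p :: real
  assumes "1 < p"
    and "HC p (UNIV :: 'a::banach set)"
  shows "alternating_BS p TYPE('a)"
proof -
  obtain lam :: real where lam: "lam > 0" and hc: "\<forall>k. \<forall>f. (\<forall>ns\<in>incr_tuples k UNIV. f ns \<in> (UNIV::'a set)) \<and> hamming_lipschitz k f \<longrightarrow>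
      (\<exists>ns\<in>incr_tuples k UNIV. \<exists>ms\<in>incr_tuples k UNIV. set ns \<inter> set ms = {} \<and>
         dist (f ns) (f ms) \<le> lam * real k powr (1 / p) * hamming_lip k f)"
    using assms(2) unfolding HC_def by blast
  have main: "\<exists>M. infinite M \<and> (\<forall>ns\<in>incr_tuples K M.
         norm (\<Sum>j<K. (-1) ^ (j + 1) *\<^sub>R x (ns ! j)) \<le> (4*lam+1) * real K powr (1 / p))"
    if x: "\<forall>n. norm (x n) \<le> 1" for x :: "nat \<Rightarrow> 'a" and K :: nat
  proof (cases "K = 0")
    case True
    then show ?thesis by (intro exI[of _ UNIV]) simp
  next
    case False
    define r where "r = (K+1) div 2"
    define m where "m = 2*r"
    have r1: "1 \<le> r" "r \<le> K" and mK: "K \<le> m" "m \<le> K+1" using False by (auto simp: r_def m_def)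
    define \<epsilon> where "\<epsilon> = 2*lam*real r powr (1/p)"
    define P where "P s cs \<longleftrightarrow> norm (\<Sum>i<m. (if s!i then 1 else -1) *\<^sub>R x (cs!i)) \<le> \<epsilon>" for s :: "bool list" and cs
    have finF: "finite {s::bool list. length s = m}" using finite_lists_length_eq[of "UNIV::bool set" m] by simp
    obtain Y where Yinf: "infinite Y" and hom: "\<forall>s\<in>{s::bool list. length s = m}.
        (\<forall>X. X \<subseteq> Y \<and> finite X \<and> card X = m \<longrightarrow> P s (sorted_list_of_set X))
      \<or> (\<forall>X. X \<subseteq> Y \<and> finite X \<and> card X = m \<longrightarrow> \<not> P s (sorted_list_of_set X))"
      using ramsey_many[OF finF, of "UNIV :: nat set" m "\<lambda>s X. P s (sorted_list_of_set X)"] by auto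
    define e where "e = enumerate Y"
    have e: "strict_mono e" unfolding e_def using Yinf by (simp add: strict_mono_def enumerate_mono)
    have eY: "\<forall>k. e k \<in> Y" unfolding e_def using Yinf by (simp add: enumerate_in_set)
    define g where "g ns = (\<Sum>j<r. x (e (ns!j)))" for ns
    have gl: "hamming_lipschitz r g" and gL: "hamming_lip r g \<le> 2"
      using lip[OF x r1(1), of e] unfolding g_def by auto
    obtain ns ms where ns: "ns \<in> incr_tuples r UNIV" and ms: "ms \<in> incr_tuples r UNIV"
      and dj: "set ns \<inter> set ms = {}" and dst: "dist (g ns) (g ms) \<le> lam * real r powr (1 / p) * hamming_lip r g"
      using hc gl by blast
    have dst2: "norm (g ns - g ms) \<le> \<epsilon>"
    proof -
      have "lam * real r powr (1 / p) * hamming_lip r g \<le> lam * real r powr (1 / p) * 2"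
        using gL lam by (intro mult_left_mono) auto
      then show ?thesis using dst unfolding \<epsilon>_def by (simp add: dist_norm)
    qed
    define A where "A = e ` set ns"
    define B where "B = e ` set ms"
    define X where "X = A \<union> B"
    have einj: "inj e" using e strict_mono_imp_inj_on by blast
    have AB: "A \<inter> B = {}" unfolding A_def B_def using dj einj by (auto simp: inj_def)
    have cA: "card A = r" unfolding A_def using incr_tuples_props(2)[OF ns] einj
      by (simp add: card_image inj_on_subset)
    have cB: "card B = r" unfolding B_def using incr_tuples_props(2)[OF ms] einj
      by (simp add: card_image inj_on_subset)
    have fX: "finite X" unfolding X_def A_def B_def by simp
    have cX: "card X = m" unfolding X_def m_def using AB cA cB
      by (simp add: card_Un_disjoint A_def B_def)
    have XY: "X \<subseteq> Y" unfolding X_def A_def B_def using eY by auto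
    define cs where "cs = sorted_list_of_set X"
    define s where "s = map (\<lambda>c. c \<in> A) cs"
    have lcs: "length cs = m" unfolding cs_def using cX by simp
    have dcs: "distinct cs" "set cs = X" unfolding cs_def using fX by auto
    have ls: "length s = m" unfolding s_def using lcs by simp
    have cnt: "length (filter id s) = r"
    proof -
      have "length (filter id s) = length (filter (\<lambda>c. c \<in> A) cs)"
        unfolding s_def by (simp add: filter_map comp_def)
      also have "\<dots> = card (set (filter (\<lambda>c. c \<in> A) cs))"
        using dcs(1) by (metis distinct_card distinct_filter)
      also have "set (filter (\<lambda>c. c \<in> A) cs) = A" using dcs unfolding X_def by auto
      finally show ?thesis using cA by (simp add: id_def)
    qed
    have gA: "g ns = (\<Sum>c\<in>A. x c)"
    proof -
      have "g ns = (\<Sum>n\<in>set ns. x (e n))"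
        unfolding g_def using list_sum_set[OF incr_tuples_props(1)[OF ns], of "\<lambda>n. x (e n)"]
          incr_tuples_props(5)[OF ns] by simp
      also have "\<dots> = (\<Sum>c\<in>A. x c)" unfolding A_def
        using sum.reindex[of e "set ns" x] einj by (simp add: inj_on_subset)
      finally show ?thesis .
    qed
    have gB: "g ms = (\<Sum>c\<in>B. x c)"
    proof -
      have "g ms = (\<Sum>n\<in>set ms. x (e n))"
        unfolding g_def using list_sum_set[OF incr_tuples_props(1)[OF ms], of "\<lambda>n. x (e n)"]
          incr_tuples_props(5)[OF ms] by simp
      also have "\<dots> = (\<Sum>c\<in>B. x c)" unfolding B_def
        using sum.reindex[of e "set ms" x] einj by (simp add: inj_on_subset)
      finally show ?thesis .
    qed
    have Ps: "P s cs"
    proof -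
      have "(\<Sum>i<m. (if s!i then 1 else -1) *\<^sub>R x (cs!i))
          = (\<Sum>i<length cs. (\<lambda>c. (if c \<in> A then 1 else -1) *\<^sub>R x c) (cs!i))"
        using lcs by (simp add: s_def)
      also have "\<dots> = (\<Sum>c\<in>X. (if c \<in> A then 1 else -1) *\<^sub>R x c)"
        using list_sum_set[OF dcs(1)] dcs(2) by simp
      also have "\<dots> = (\<Sum>c\<in>A. (if c \<in> A then 1 else -1) *\<^sub>R x c) + (\<Sum>c\<in>B. (if c \<in> A then 1 else -1) *\<^sub>R x c)"
        unfolding X_def using AB by (intro sum.union_disjoint) (auto simp: A_def B_def)
      also have "\<dots> = g ns - g ms"
      proof -
        have "(\<Sum>c\<in>A. (if c \<in> A then 1 else -1) *\<^sub>R x c) = (\<Sum>c\<in>A. x c)" by simp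
        moreover have "(\<Sum>c\<in>B. (if c \<in> A then 1 else -1) *\<^sub>R x c) = (\<Sum>c\<in>B. - x c)"
          using AB by (intro sum.cong) auto
        ultimately show ?thesis unfolding gA gB by (simp add: sum_negf)
      qed
      finally show ?thesis unfolding P_def using dst2 by simp
    qed
    have allP: "\<forall>X'. X' \<subseteq> Y \<and> finite X' \<and> card X' = m \<longrightarrow> P s (sorted_list_of_set X')"
      using hom ls Ps XY fX cX unfolding cs_def by auto
    have homl: "\<forall>cs'\<in>incr_tuples m Y. norm (\<Sum>i<m. (if s!i then 1 else -1) *\<^sub>R x (cs'!i)) \<le> \<epsilon>"
    proof
      fix cs' assume c: "cs' \<in> incr_tuples m Y"
      have "P s (sorted_list_of_set (set cs'))"
        using allP incr_tuples_props(2,4)[OF c] by blast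
      then show "norm (\<Sum>i<m. (if s!i then 1 else -1) *\<^sub>R x (cs'!i)) \<le> \<epsilon>"
        using incr_tuples_props(3)[OF c] unfolding P_def by simp
    qed
    define M where "M = range (\<lambda>k. e ((m+1)*(k+1)))"
    have Minf: "infinite M" unfolding M_def
    proof (rule range_inj_infinite)
      show "inj (\<lambda>k. e ((m+1)*(k+1)))"
      proof (rule injI)
        fix a b assume "e ((m+1)*(a+1)) = e ((m+1)*(b+1))"
        then have "(m+1)*(a+1) = (m+1)*(b+1)" using einj by (simp add: inj_eq)
        then have "a + 1 = b + 1" by (metis mult_left_cancel add_eq_0_iff_both_eq_0 one_neq_zero)
        then show "a = b" by simp
      qed
    qed
    show ?thesis
    proof (intro exI conjI ballI)
      show "infinite M" by fact
      fix c assume c: "c \<in> incr_tuples K M"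
      obtain c' where c': "c' \<in> incr_tuples (K + (m - K)) M" "take K c' = c"
        using extend_tuple[OF Minf c] by blast
      have c'm: "c' \<in> incr_tuples m M" using c' mK by simp
      have cb: "norm (\<Sum>l<m. (-1)^l *\<^sub>R x (c'!l)) \<le> 2*\<epsilon>"
      proof (rule comb[OF e eY ls cnt m_def homl])
        show "length c' = m" "sorted_wrt (<) c'" using c'm by (auto simp: incr_tuples_def)
        show "\<forall>l<m. c'!l \<in> range (\<lambda>k. e ((m+1)*(k+1)))"
          using c'm unfolding incr_tuples_def M_def by auto
      qed
      have lc': "length c' = m" using c'm by (simp add: incr_tuples_def)
      have eqc: "c!j = c'!j" if "j < K" for j using c'(2) that by auto
      have s1: "(\<Sum>j<K. (-1) ^ (j + 1) *\<^sub>R x (c ! j)) = - (\<Sum>l<K. (-1)^l *\<^sub>R x (c'!l))"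
        by (simp add: sum_negf[symmetric] eqc)
      have nK: "norm (\<Sum>l<K. (-1)^l *\<^sub>R x (c'!l)) \<le> 2*\<epsilon> + 1"
      proof (cases "m = K")
        case True then show ?thesis using cb by simp
      next
        case False
        then have mk: "m = Suc K" using mK by simp
        have eqK: "(\<Sum>l<K. (-1)^l *\<^sub>R x (c'!l)) = (\<Sum>l<m. (-1)^l *\<^sub>R x (c'!l)) - (-1)^K *\<^sub>R x (c'!K)"
          unfolding mk by simp
        have "norm (\<Sum>l<K. (-1)^l *\<^sub>R x (c'!l)) = norm ((\<Sum>l<m. (-1)^l *\<^sub>R x (c'!l)) - (-1)^K *\<^sub>R x (c'!K))"
          by (simp only: eqK)
        moreover have "norm ((-1::real)^K *\<^sub>R x (c'!K)) \<le> 1" using x by simp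
        ultimately show ?thesis using cb norm_triangle_ineq4[of "(\<Sum>l<m. (-1)^l *\<^sub>R x (c'!l))" "(-1::real)^K *\<^sub>R x (c'!K)"]
          by linarith
      qed
      have rp: "real r powr (1/p) \<le> real K powr (1/p)" using r1 assms(1) by (intro powr_mono2) auto
      have Kp: "1 \<le> real K powr (1/p)" using False assms(1) by (intro ge_one_powr_ge_zero) auto
      have "2*\<epsilon> + 1 \<le> (4*lam+1) * real K powr (1/p)"
        unfolding \<epsilon>_def using rp Kp lam by (simp add: algebra_simps) (smt (verit) mult_left_mono)
      then show "norm (\<Sum>j<K. (-1) ^ (j + 1) *\<^sub>R x (c ! j)) \<le> (4*lam+1) * real K powr (1 / p)"
        using nK s1 by simp
    qed
  qed
  show ?thesis unfolding alternating_BS_def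
    using lam main by (intro exI[of _ "4*lam+1"]) auto
qed

end
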